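(* Let $\mathcal G=(\mathcal V,\mathcal E)$ be a $k$-uniform hypergraph with $|\mathcal V|=n$, $|\mathcal E|=m\ge1$, in which every vertex lies in exactly $\Delta$ hyperedges. Let $H=\sum_{\eta\in\mathcal E}H_\eta$ be a local Hamiltonian on $(\mathbb C^d)^{\otimes n}$ with each $H_\eta$ Hermitian, acting only on the qudits in $\eta$, and $\|H_\eta\|\le1$. Let $h=\frac1mH$ and let $\nu_h$ be its empirical spectral distribution. Then \[\operatorname{Var}(\nu_h)=\int t^2\,d\nu_h(t)-\Big(\int t\,d\nu_h(t)\Big)^2\le \frac{4k^2}{n}.\]
   Context: $H_\eta$ stands for $H_\eta\otimes I$. The empirical spectral distribution of a Hermitian operator $A$ on a $D$-dimensional space is $\nu_A=\frac1D\sum_{i=1}^D\delta_{\lambda_i(A)}$, with eigenvalues counted with multiplicity. *)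

theory Defs
  imports "Jordan_Normal_Form.Jordan_Normal_Form" "Jordan_Normal_Form.Schur_Decomposition"
    "HOL-Computational_Algebra.Polynomial" "HOL-Probability.Probability_Mass_Function"
begin

text \<open>The Hilbert space (C^d)^{n-fold tensor} is identified with C^(d^n); basis index
  x < d^n encodes the configuration whose i-th qudit is digit d x i (base-d expansion).\<close>

definition digit :: "nat \<Rightarrow> nat \<Rightarrow> nat \<Rightarrow> nat" where
  "digit d x i = (x div d ^ i) mod d"

text \<open>A (d^n x d^n) matrix A acts only on the qudits in S, i.e. A = B \<otimes> I:
  matrix entries vanish unless row and column agree outside S, and the entries depend
  only on the S-components of row and column.\<close>
definition acts_only_on :: "nat \<Rightarrow> nat \<Rightarrow> nat set \<Rightarrow> complex mat \<Rightarrow> bool" where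
  "acts_only_on d n S A \<longleftrightarrow>
     A \<in> carrier_mat (d ^ n) (d ^ n) \<and>
     (\<forall>x<d ^ n. \<forall>y<d ^ n. (\<exists>i<n. i \<notin> S \<and> digit d x i \<noteq> digit d y i) \<longrightarrow> A $$ (x, y) = 0) \<and>
     (\<forall>x<d ^ n. \<forall>y<d ^ n. \<forall>x'<d ^ n. \<forall>y'<d ^ n.
        (\<forall>i<n. i \<notin> S \<longrightarrow> digit d x i = digit d y i) \<and>
        (\<forall>i<n. i \<notin> S \<longrightarrow> digit d x' i = digit d y' i) \<and>
        (\<forall>i\<in>S. digit d x i = digit d x' i \<and> digit d y i = digit d y' i)
        \<longrightarrow> A $$ (x, y) = A $$ (x', y'))"

definition hermitian_mat :: "complex mat \<Rightarrow> bool" where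
  "hermitian_mat A \<longleftrightarrow> square_mat A \<and> mat_adjoint A = A"

definition vec_norm :: "complex Matrix.vec \<Rightarrow> real" where
  "vec_norm v = sqrt (\<Sum>i<dim_vec v. (cmod (v $ i))\<^sup>2)"

definition op_norm :: "complex mat \<Rightarrow> real" where
  "op_norm A = (SUP v \<in> {v. v \<in> carrier_vec (dim_col A) \<and> vec_norm v \<le> 1}. vec_norm (A *\<^sub>v v))"

definition eigenvalues_mset :: "complex mat \<Rightarrow> complex multiset" where
  "eigenvalues_mset A = proots (char_poly A)"

definition esd :: "complex mat \<Rightarrow> real pmf" where
  "esd A = pmf_of_multiset (image_mset Re (eigenvalues_mset A))"

end

theory Submission
  imports Defs
begin

unbundle no vec_syntax



lemma digit_0: "digit d x 0 = x mod d" by (simp add: digit_def)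
lemma digit_Suc: "digit d x (Suc i) = digit d (x div d) i"
  by (simp add: digit_def div_mult2_eq mult.commute)

lemma digit_lt: "d \<ge> 1 \<Longrightarrow> digit d x i < d" by (simp add: digit_def)

lemma digit_high: assumes "d \<ge> 1" "x < d ^ n" "n \<le> i" shows "digit d x i = 0"
proof (cases "d = 1")
  case True thus ?thesis by (simp add: digit_def)
next
  case False
  hence "d ^ n \<le> d ^ i" using assms by (intro power_increasing) auto
  hence "x div d ^ i = 0" using assms by simp
  thus ?thesis by (simp add: digit_def)
qed

fun num :: "nat \<Rightarrow> nat \<Rightarrow> (nat \<Rightarrow> nat) \<Rightarrow> nat" where
  "num d 0 f = 0"
| "num d (Suc n) f = f 0 + d * num d n (\<lambda>i. f (Suc i))"

lemma num_lt: "d \<ge> 1 \<Longrightarrow> (\<forall>i<n. f i < d) \<Longrightarrow> num d n f < d ^ n"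
proof (induction n arbitrary: f)
  case 0 thus ?case by simp
next
  case (Suc n)
  have IH: "num d n (\<lambda>i. f (Suc i)) + 1 \<le> d ^ n" using Suc by force
  have "d * (num d n (\<lambda>i. f (Suc i)) + 1) \<le> d * d ^ n" using mult_le_mono2[OF IH] by blast
  moreover have "f 0 < d" using Suc by auto
  ultimately show ?case by (simp add: algebra_simps)
qed

lemma digit_num: "d \<ge> 1 \<Longrightarrow> (\<forall>i<n. f i < d) \<Longrightarrow> i < n \<Longrightarrow> digit d (num d n f) i = f i"
proof (induction n arbitrary: f i)
  case 0 thus ?case by simp
next
  case (Suc n)
  have f0: "f 0 < d" using Suc by auto
  show ?case
  proof (cases i)
    case 0 thus ?thesis using f0 by (simp add: digit_0)
  next
    case (Suc j)
    have "(f 0 + d * num d n (\<lambda>i. f (Suc i))) div d = num d n (\<lambda>i. f (Suc i))"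
      using f0 by simp
    thus ?thesis using Suc.prems Suc.IH[of "\<lambda>i. f (Suc i)" j] \<open>i = Suc j\<close>
      by (simp add: digit_Suc)
  qed
qed

lemma num_digit: "d \<ge> 1 \<Longrightarrow> x < d ^ n \<Longrightarrow> num d n (digit d x) = x"
proof (induction n arbitrary: x)
  case 0 thus ?case by simp
next
  case (Suc n)
  have "x div d < d ^ n" using Suc.prems
    by (simp add: div_less_iff_less_mult mult.commute)
  hence "num d n (digit d (x div d)) = x div d" using Suc by blast
  hence "num d (Suc n) (digit d x) = x mod d + d * (x div d)"
    by (simp add: digit_0 digit_Suc[abs_def])
  thus ?case by simp
qed

lemma num_cong: "(\<forall>i<n. f i = g i) \<Longrightarrow> num d n f = num d n g"
  by (induction n arbitrary: f g) auto

lemma digit_eq: assumes "d \<ge> 1" "x < d ^ n" "y < d ^ n" "\<forall>i<n. digit d x i = digit d y i"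
  shows "x = y"
proof -
  have "num d n (digit d x) = num d n (digit d y)" using assms(4) by (rule num_cong)
  thus ?thesis using num_digit assms by metis
qed

definition mtr :: "complex mat \<Rightarrow> complex" where
  "mtr A = (\<Sum>i<dim_row A. A $$ (i, i))"

definition mix :: "nat \<Rightarrow> nat \<Rightarrow> nat set \<Rightarrow> nat \<Rightarrow> nat \<Rightarrow> nat" where
  "mix d n S x y = num d n (\<lambda>i. if i \<in> S then digit d x i else digit d y i)"

lemma mix_lt: "d \<ge> 1 \<Longrightarrow> mix d n S x y < d ^ n"
  unfolding mix_def by (rule num_lt) (auto simp: digit_lt)

lemma digit_mix: "d \<ge> 1 \<Longrightarrow> i < n \<Longrightarrow>
   digit d (mix d n S x y) i = (if i \<in> S then digit d x i else digit d y i)"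
  unfolding mix_def by (rule digit_num) (auto simp: digit_lt)

lemma mix_mix: assumes "d \<ge> 1" "x < d ^ n"
  shows "mix d n S (mix d n S x y) (mix d n S y x) = x"
proof -
  have "mix d n S (mix d n S x y) (mix d n S y x) = num d n (digit d x)"
    unfolding mix_def[of d n S "mix d n S x y"]
    by (rule num_cong) (use digit_mix[OF assms(1)] in auto)
  thus ?thesis using num_digit assms by simp
qed

lemma tr_factor:
  assumes d: "d \<ge> 1" and A: "acts_only_on d n S A" and B: "acts_only_on d n T B"
    and ST: "S \<inter> T = {}"
  shows "of_nat (d ^ n) * mtr (A * B) = mtr A * mtr B"
proof -
  define D where "D = d ^ n"
  have Ac: "A \<in> carrier_mat D D" and Bc: "B \<in> carrier_mat D D"
    using A B unfolding acts_only_on_def D_def by auto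
  have Aoff: "\<And>x y i. x < D \<Longrightarrow> y < D \<Longrightarrow> i < n \<Longrightarrow> i \<notin> S \<Longrightarrow> digit d x i \<noteq> digit d y i \<Longrightarrow> A $$ (x, y) = 0"
    using A unfolding acts_only_on_def D_def by blast
  have Boff: "\<And>x y i. x < D \<Longrightarrow> y < D \<Longrightarrow> i < n \<Longrightarrow> i \<notin> T \<Longrightarrow> digit d x i \<noteq> digit d y i \<Longrightarrow> B $$ (x, y) = 0"
    using B unfolding acts_only_on_def D_def by blast
  have Adiag: "\<And>x x'. x < D \<Longrightarrow> x' < D \<Longrightarrow> (\<forall>i\<in>S. digit d x i = digit d x' i) \<Longrightarrow> A $$ (x, x) = A $$ (x', x')"
    using A unfolding acts_only_on_def D_def by blast
  have Bdiag: "\<And>x x'. x < D \<Longrightarrow> x' < D \<Longrightarrow> (\<forall>i\<in>T. digit d x i = digit d x' i) \<Longrightarrow> B $$ (x, x) = B $$ (x', x')"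
    using B unfolding acts_only_on_def D_def by blast
  have step1: "(A * B) $$ (x, x) = A $$ (x, x) * B $$ (x, x)" if x: "x < D" for x
  proof -
    have "(A * B) $$ (x, x) = (\<Sum>y\<in>{0..<D}. A $$ (x, y) * B $$ (y, x))"
      using Ac Bc x by (simp add: index_mult_mat scalar_prod_def)
    also have "\<dots> = A $$ (x, x) * B $$ (x, x) + (\<Sum>y\<in>{0..<D}-{x}. A $$ (x, y) * B $$ (y, x))"
      by (rule sum.remove) (use x in auto)
    also have "(\<Sum>y\<in>{0..<D}-{x}. A $$ (x, y) * B $$ (y, x)) = 0"
    proof (rule sum.neutral, rule ballI)
      fix y assume "y \<in> {0..<D}-{x}"
      hence y: "y \<in> {0..<D}" "y \<noteq> x" by auto
      then obtain i where i: "i < n" "digit d x i \<noteq> digit d y i"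
        using digit_eq[OF d, of x n y] x unfolding D_def by auto
      show "A $$ (x, y) * B $$ (y, x) = 0"
      proof (cases "i \<in> S")
        case False thus ?thesis using Aoff[of x y i] i x y by simp
      next
        case True hence "i \<notin> T" using ST by auto
        thus ?thesis using Boff[of y x i] i x y by simp
      qed
    qed
    finally show ?thesis by simp
  qed
  have lhs: "mtr (A * B) = (\<Sum>z<D. A $$ (z, z) * B $$ (z, z))"
    unfolding mtr_def using Ac by (auto intro!: sum.cong simp: step1)
  define G where "G z = A $$ (z, z) * B $$ (z, z)" for z
  define g where "g p = (mix d n S (fst p) (snd p), mix d n S (snd p) (fst p))" for p
  let ?X = "{..<D} \<times> {..<D}"
  have mixA: "A $$ (mix d n S x y, mix d n S x y) = A $$ (x, x)" if "x < D" "y < D" for x y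
  proof (rule Adiag)
    show "\<forall>i\<in>S. digit d (mix d n S x y) i = digit d x i"
    proof
      fix i assume "i \<in> S"
      show "digit d (mix d n S x y) i = digit d x i"
      proof (cases "i < n")
        case True thus ?thesis using digit_mix[OF d True] \<open>i \<in> S\<close> by simp
      next
        case False thus ?thesis using digit_high[OF d] mix_lt[OF d] that unfolding D_def
          by (metis not_le)
      qed
    qed
  qed (use that mix_lt[OF d] in \<open>auto simp: D_def\<close>)
  have mixB: "B $$ (mix d n S x y, mix d n S x y) = B $$ (y, y)" if "x < D" "y < D" for x y
  proof (rule Bdiag)
    show "\<forall>i\<in>T. digit d (mix d n S x y) i = digit d y i"
    proof
      fix i assume "i \<in> T"
      hence "i \<notin> S" using ST by auto
      show "digit d (mix d n S x y) i = digit d y i"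
      proof (cases "i < n")
        case True thus ?thesis using digit_mix[OF d True] \<open>i \<notin> S\<close> by simp
      next
        case False thus ?thesis using digit_high[OF d] mix_lt[OF d] that unfolding D_def
          by (metis not_le)
      qed
    qed
  qed (use that mix_lt[OF d] in \<open>auto simp: D_def\<close>)
  have bij: "bij_betw g ?X ?X"
    by (rule bij_betw_byWitness[of _ g])
       (auto simp: g_def mix_mix[OF d] mix_lt[OF d] D_def)
  have "mtr A * mtr B = (\<Sum>x<D. \<Sum>y<D. A $$ (x, x) * B $$ (y, y))"
    unfolding mtr_def using Ac Bc by (simp add: sum_product)
  also have "\<dots> = (\<Sum>p\<in>?X. A $$ (fst p, fst p) * B $$ (snd p, snd p))"
    by (simp add: sum.cartesian_product case_prod_beta)
  also have "\<dots> = (\<Sum>p\<in>?X. G (fst (g p)))"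
    by (rule sum.cong) (auto simp: G_def g_def mixA mixB)
  also have "\<dots> = (\<Sum>p\<in>?X. G (fst p))"
    using sum.reindex_bij_betw[OF bij, of "\<lambda>p. G (fst p)"] by simp
  also have "\<dots> = (\<Sum>x<D. \<Sum>y<D. G x)"
    by (simp only: sum.cartesian_product) (simp add: case_prod_beta)
  also have "\<dots> = of_nat D * (\<Sum>x<D. G x)"
    by (simp add: sum_distrib_left)
  finally show ?thesis using lhs unfolding G_def D_def by simp
qed




lemma herm_eig_real:
  assumes hc: "h \<in> carrier_mat D D"
    and herm: "\<And>i j. i < D \<Longrightarrow> j < D \<Longrightarrow> h $$ (i, j) = cnj (h $$ (j, i))"
    and ev: "eigenvalue h e"
  shows "Im e = 0"
proof -
  obtain v where v: "v \<in> carrier_vec D" "v \<noteq> 0\<^sub>v D" "h *\<^sub>v v = e \<cdot>\<^sub>v v"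
    using ev hc unfolding eigenvalue_def eigenvector_def by auto
  define s where "s = (\<Sum>i<D. cnj (v $ i) * (\<Sum>j<D. h $$ (i, j) * v $ j))"
  define N where "N = (\<Sum>i<D. (cmod (v $ i))\<^sup>2)"
  have hv: "(h *\<^sub>v v) $ i = (\<Sum>j<D. h $$ (i, j) * v $ j)" if "i < D" for i
    using hc v(1) that by (auto simp: scalar_prod_def lessThan_atLeast0 intro!: sum.cong)
  have "s = (\<Sum>i<D. cnj (v $ i) * (e * v $ i))"
    unfolding s_def by (rule sum.cong) (use v hv in auto)
  also have "\<dots> = e * of_real N"
    unfolding N_def by (auto simp: sum_distrib_left mult.commute[of "cnj _"] complex_norm_square intro!: sum.cong
      simp flip: of_real_power)
  finally have s1: "s = e * of_real N" .
  have hc': "cnj (h $$ (i, j)) = h $$ (j, i)" if "i < D" "j < D" for i j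
    using herm[OF that(2,1)] by simp
  have "cnj s = (\<Sum>i<D. \<Sum>j<D. v $ i * (h $$ (j, i) * cnj (v $ j)))"
    unfolding s_def by (auto simp: sum_distrib_left hc' intro!: sum.cong)
  also have "\<dots> = (\<Sum>j<D. \<Sum>i<D. v $ i * (h $$ (j, i) * cnj (v $ j)))"
    by (rule sum.swap)
  also have "\<dots> = s"
    unfolding s_def by (auto simp: sum_distrib_left intro!: sum.cong)
  finally have s2: "cnj s = s" .
  obtain i where i: "i < D" "v $ i \<noteq> 0" using v(1,2) by (metis carrier_vecD eq_vecI index_zero_vec(1,2))
  have "N \<ge> (cmod (v $ i))\<^sup>2" unfolding N_def
    by (rule member_le_sum) (use i in auto)
  moreover have "(cmod (v $ i))\<^sup>2 > 0" using i by simp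
  ultimately have "N > 0" by linarith
  from s1 s2 have "cnj e * of_real N = e * of_real N" by (metis complex_cnj_complex_of_real complex_cnj_mult)
  hence "cnj e = e" using \<open>N > 0\<close> by simp
  thus ?thesis by (metis Reals_cnj_iff complex_is_Real_iff)
qed

lemma mtr_mult: "A \<in> carrier_mat n m \<Longrightarrow> B \<in> carrier_mat m n \<Longrightarrow>
    mtr (A * B) = (\<Sum>i<n. \<Sum>k<m. A $$ (i, k) * B $$ (k, i))"
  unfolding mtr_def by (auto simp: scalar_prod_def lessThan_atLeast0 intro!: sum.cong)

lemma mtr_comm: "A \<in> carrier_mat n m \<Longrightarrow> B \<in> carrier_mat m n \<Longrightarrow> mtr (A * B) = mtr (B * A)"
  by (simp add: mtr_mult sum.swap[of _ "{..<n}"] mult.commute)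

lemma mtr_upper_sq: assumes "B \<in> carrier_mat D D" "upper_triangular B"
  shows "mtr (B * B) = (\<Sum>i<D. (B $$ (i, i))^2)"
proof -
  have "(\<Sum>k<D. B $$ (i, k) * B $$ (k, i)) = (B $$ (i, i))^2" if i: "i < D" for i
  proof -
    have "(\<Sum>k<D. B $$ (i, k) * B $$ (k, i)) = B $$ (i, i) * B $$ (i, i) + (\<Sum>k\<in>{..<D}-{i}. B $$ (i, k) * B $$ (k, i))"
      by (rule sum.remove) (use i in auto)
    also have "(\<Sum>k\<in>{..<D}-{i}. B $$ (i, k) * B $$ (k, i)) = 0"
    proof (rule sum.neutral, rule ballI)
      fix k assume k: "k \<in> {..<D}-{i}"
      show "B $$ (i, k) * B $$ (k, i) = 0"
      proof (cases "k < i")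
        case True thus ?thesis using assms i unfolding upper_triangular_def by auto
      next
        case False hence "i < k" using k by auto
        thus ?thesis using assms k unfolding upper_triangular_def by auto
      qed
    qed
    finally show ?thesis by (simp add: power2_eq_square)
  qed
  thus ?thesis using assms(1) by (simp add: mtr_mult)
qed

lemma proots_lin_prod: "proots (\<Prod>e\<leftarrow>es. [:- e, 1:]) = mset (es :: complex list)"
proof (induction es)
  case Nil thus ?case by simp
next
  case (Cons a es)
  have nz: "(\<Prod>e\<leftarrow>es. [:- e, 1:]) \<noteq> (0::complex poly)" by (auto simp: prod_list_zero_iff)
  have eq: "(\<Prod>e\<leftarrow>a # es. [:- e, 1:]) = [:-a,1:] * (\<Prod>e\<leftarrow>es. [:- e, 1:])" by simp
  have "proots ([:-a,1:] * (\<Prod>e\<leftarrow>es. [:- e, 1:])) = proots [:- a, 1:] + proots (\<Prod>e\<leftarrow>es. [:- e, 1:])"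
    by (rule proots_mult) (simp, rule nz)
  hence "proots (\<Prod>e\<leftarrow>a # es. [:- e, 1:]) = proots [:- a, 1:] + proots (\<Prod>e\<leftarrow>es. [:- e, 1:])"
    unfolding eq .
  also have "proots [:- a, 1:] = {#a#}" by (metis minus_minus proots_linear_factor)
  also have "{#a#} + proots (\<Prod>e\<leftarrow>es. [:- e, 1:]) = mset (a # es)" using Cons.IH by simp
  finally show ?case .
qed

lemma poly_lin_prod: "e \<in> set es \<Longrightarrow> poly (\<Prod>a\<leftarrow>es. [:- a, 1:]) e = (0::complex)"
  by (induction es) auto

lemma sum_list_count_real:
  "finite X \<Longrightarrow> set xs \<subseteq> X \<Longrightarrow> sum_list (map f xs) = (\<Sum>x\<in>X. real (count_list xs x) * (f x :: real))"
proof (induction xs)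
  case Nil thus ?case by simp
next
  case (Cons a xs)
  have "(\<Sum>x\<in>X. real (count_list (a # xs) x) * f x)
      = (\<Sum>x\<in>X. (if a = x then f x else 0)) + (\<Sum>x\<in>X. real (count_list xs x) * f x)"
  proof -
    have "(\<Sum>x\<in>X. real (count_list (a # xs) x) * f x)
      = (\<Sum>x\<in>X. (if a = x then f x else 0) + real (count_list xs x) * f x)"
      by (rule sum.cong) (auto simp: distrib_right)
    also have "\<dots> = (\<Sum>x\<in>X. (if a = x then f x else 0)) + (\<Sum>x\<in>X. real (count_list xs x) * f x)"
      by (rule sum.distrib)
    finally show ?thesis .
  qed
  also have "(\<Sum>x\<in>X. (if a = x then f x else 0)) = f a" using Cons.prems by (simp add: sum.delta)
  finally show ?case using Cons by simp
qed

lemma integral_pmf_mset_list: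
  assumes "xs \<noteq> []"
  shows "measure_pmf.expectation (pmf_of_multiset (mset xs)) f = sum_list (map f xs) / length xs"
proof -
  have ne: "mset xs \<noteq> {#}" using assms by simp
  have "measure_pmf.expectation (pmf_of_multiset (mset xs)) f
      = (\<Sum>a\<in>set xs. pmf (pmf_of_multiset (mset xs)) a *\<^sub>R f a)"
    by (rule integral_measure_pmf) (use ne in auto)
  also have "\<dots> = (\<Sum>a\<in>set xs. real (count_list xs a) * f a) / length xs"
    using ne by (simp add: sum_divide_distrib count_mset)
  also have "\<dots> = sum_list (map f xs) / length xs"
    by (simp add: sum_list_count_real[of "set xs"])
  finally show ?thesis .
qed



lemma esd_stats:
  assumes hc: "h \<in> carrier_mat D D" and Dpos: "D > 0"
    and herm: "\<And>i j. i < D \<Longrightarrow> j < D \<Longrightarrow> h $$ (i, j) = cnj (h $$ (j, i))"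
  shows "measure_pmf.expectation (esd h) (\<lambda>t. t ^ 2) = Re (mtr (h * h)) / D"
    and "measure_pmf.expectation (esd h) (\<lambda>t. t) = Re (mtr h) / D"
proof -
  obtain es where cp: "char_poly h = (\<Prod>a\<leftarrow>es. [:- a, 1:])" and len: "length es = D"
    using char_poly_factorized[OF hc] by blast
  obtain B P Q where sd: "schur_decomposition h es = (B, P, Q)" by (metis prod_cases3)
  from schur_decomposition[OF hc cp sd]
  have sim: "similar_mat_wit h B P Q" and ut: "upper_triangular B" and dg: "diag_mat B = es" by auto
  from sim hc have Bc: "B \<in> carrier_mat D D" and Pc: "P \<in> carrier_mat D D" and Qc: "Q \<in> carrier_mat D D"
    and QP: "Q * P = 1\<^sub>m D" and hPBQ: "h = P * B * Q"
    unfolding similar_mat_wit_def Let_def by auto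
  have eig: "eigenvalues_mset h = mset es"
    unfolding eigenvalues_mset_def cp by (rule proots_lin_prod)
  have real: "Im e = 0" if "e \<in> set es" for e
  proof (rule herm_eig_real[OF hc herm])
    show "eigenvalue h e" using eigenvalue_root_char_poly[OF hc] poly_lin_prod[OF that] cp by simp
  qed
  have esd: "esd h = pmf_of_multiset (mset (map Re es))"
    unfolding esd_def eig by simp
  have ne: "map Re es \<noteq> []" using len Dpos by auto
  have diag: "B $$ (i, i) = es ! i" if "i < D" for i
    using dg Bc that unfolding diag_mat_def by auto
  have trB: "mtr B = (\<Sum>i<D. es ! i)"
    unfolding mtr_def using Bc diag by auto
  have "mtr h = mtr (P * B * Q)" using hPBQ by simp
  also have "\<dots> = mtr (Q * (P * B))" by (rule mtr_comm) (use Pc Bc Qc in auto)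
  also have "Q * (P * B) = (Q * P) * B" using Pc Bc Qc by (simp add: assoc_mult_mat)
  also have "\<dots> = B" using QP Bc by simp
  finally have trh: "mtr h = mtr B" .
  have "h * h = (P * B * Q) * (P * B * Q)" using hPBQ by simp
  also have "\<dots> = P * (B * ((Q * P) * (B * Q)))"
    using Pc Bc Qc by (simp add: assoc_mult_mat[of _ D D _ D _ D])
  also have "\<dots> = P * (B * B) * Q"
    using Pc Bc Qc QP by (simp add: assoc_mult_mat[of _ D D _ D _ D])
  finally have "mtr (h * h) = mtr (P * (B * B) * Q)" by simp
  also have "\<dots> = mtr (Q * (P * (B * B)))" by (rule mtr_comm) (use Pc Bc Qc in auto)
  also have "Q * (P * (B * B)) = (Q * P) * (B * B)"
    by (rule assoc_mult_mat[symmetric, of _ D D _ D _ D]) (use Pc Bc Qc in auto)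
  also have "\<dots> = B * B" using QP Bc by simp
  finally have trhh: "mtr (h * h) = (\<Sum>i<D. (es ! i)^2)"
    using mtr_upper_sq[OF Bc ut] diag by simp
  have sl: "sum_list (map g (map Re es)) = (\<Sum>i<D. g (Re (es ! i)))" for g
    by (simp add: sum_list_sum_nth len lessThan_atLeast0)
  have nth_real: "Im (es ! i) = 0" if "i < D" for i using real len that by simp
  show "measure_pmf.expectation (esd h) (\<lambda>t. t ^ 2) = Re (mtr (h * h)) / D"
    unfolding esd integral_pmf_mset_list[OF ne] sl trhh using len
    by (simp add: Re_sum power2_eq_square nth_real)
  show "measure_pmf.expectation (esd h) (\<lambda>t. t) = Re (mtr h) / D"
    unfolding esd integral_pmf_mset_list[OF ne] sl trh trB using len
    by (simp add: Re_sum)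
qed




lemma herm_entry: assumes "hermitian_mat A" "A \<in> carrier_mat D D" "i < D" "j < D"
  shows "A $$ (i, j) = cnj (A $$ (j, i))"
proof -
  have "mat_adjoint A $$ (i, j) = cnj (A $$ (j, i))"
    using assms(2-4) unfolding mat_adjoint_def by (simp add: mat_of_rows_def)
  thus ?thesis using assms(1) unfolding hermitian_mat_def by simp
qed

lemma vec_norm_le_sum: "vec_norm w \<le> (\<Sum>i<dim_vec w. cmod (w $ i))"
proof -
  have "vec_norm w = L2_set (\<lambda>i. cmod (w $ i)) {..<dim_vec w}"
    unfolding vec_norm_def L2_set_def by simp
  also have "\<dots> \<le> (\<Sum>i<dim_vec w. cmod (w $ i))" by (rule L2_set_le_sum) auto
  finally show ?thesis .
qed

lemma vec_norm_entry: assumes "vec_norm v \<le> 1" "i < dim_vec v" shows "cmod (v $ i) \<le> 1"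
proof -
  define S where "S = (\<Sum>i<dim_vec v. (cmod (v $ i))\<^sup>2)"
  have "sqrt S \<le> 1" using assms(1) unfolding vec_norm_def S_def .
  hence S1: "S \<le> 1" by simp
  have "(cmod (v $ i))\<^sup>2 \<le> S" unfolding S_def
    by (rule member_le_sum) (use assms in auto)
  hence "(cmod (v $ i))\<^sup>2 \<le> 1" using S1 by linarith
  thus ?thesis by (simp add: power_le_one_iff)
qed

lemma mult_vec_entry: "A \<in> carrier_mat nr nc \<Longrightarrow> v \<in> carrier_vec nc \<Longrightarrow> i < nr \<Longrightarrow>
  (A *\<^sub>v v) $ i = (\<Sum>j<nc. A $$ (i, j) * v $ j)"
  by (auto simp: scalar_prod_def lessThan_atLeast0 intro!: sum.cong)

lemma op_norm_ge:
  assumes A: "A \<in> carrier_mat nr nc" and v: "v \<in> carrier_vec nc" "vec_norm v \<le> 1"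
  shows "vec_norm (A *\<^sub>v v) \<le> op_norm A"
proof -
  let ?M = "\<Sum>i<nr. \<Sum>j<nc. cmod (A $$ (i, j))"
  have bd: "vec_norm (A *\<^sub>v w) \<le> ?M" if w: "w \<in> carrier_vec nc" "vec_norm w \<le> 1" for w
  proof -
    have "vec_norm (A *\<^sub>v w) \<le> (\<Sum>i<nr. cmod ((A *\<^sub>v w) $ i))"
      using vec_norm_le_sum[of "A *\<^sub>v w"] A by simp
    also have "\<dots> \<le> ?M"
    proof (rule sum_mono)
      fix i assume i: "i \<in> {..<nr}"
      have "cmod ((A *\<^sub>v w) $ i) = cmod (\<Sum>j<nc. A $$ (i, j) * w $ j)"
        using mult_vec_entry[OF A w(1)] i by simp
      also have "\<dots> \<le> (\<Sum>j<nc. cmod (A $$ (i, j) * w $ j))" by (rule norm_sum)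
      also have "\<dots> \<le> (\<Sum>j<nc. cmod (A $$ (i, j)))"
      proof (rule sum_mono)
        fix j assume "j \<in> {..<nc}"
        hence "cmod (w $ j) \<le> 1" using vec_norm_entry[OF w(2)] w(1) by auto
        thus "cmod (A $$ (i, j) * w $ j) \<le> cmod (A $$ (i, j))"
          by (simp add: norm_mult mult_left_le)
      qed
      finally show "cmod ((A *\<^sub>v w) $ i) \<le> (\<Sum>j<nc. cmod (A $$ (i, j)))" .
    qed
    finally show ?thesis .
  qed
  have "bdd_above ((\<lambda>v. vec_norm (A *\<^sub>v v)) ` {v. v \<in> carrier_vec (dim_col A) \<and> vec_norm v \<le> 1})"
    by (rule bdd_aboveI[of _ ?M]) (use bd A in auto)
  thus ?thesis unfolding op_norm_def
    by (rule cSUP_upper[rotated]) (use v A in auto)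
qed

lemma col_sq_le:
  assumes A: "A \<in> carrier_mat D D" and nA: "op_norm A \<le> 1" and j: "j < D"
  shows "(\<Sum>i<D. (cmod (A $$ (i, j)))\<^sup>2) \<le> 1"
proof -
  let ?u = "unit_vec D j :: complex Matrix.vec"
  have "(\<Sum>i<D. (cmod (?u $ i))\<^sup>2) = (\<Sum>i<D. if i = j then 1 else 0)"
    by (rule sum.cong) (auto simp: unit_vec_def)
  also have "\<dots> = 1" using j by simp
  finally have "vec_norm ?u = 1" unfolding vec_norm_def by simp
  hence "vec_norm (A *\<^sub>v ?u) \<le> 1" using op_norm_ge[OF A, of ?u] nA by simp
  moreover have "(A *\<^sub>v ?u) $ i = A $$ (i, j)" if "i < D" for i
    using A that j by (simp add: scalar_prod_right_unit)
  ultimately have "sqrt (\<Sum>i<D. (cmod (A $$ (i, j)))\<^sup>2) \<le> 1"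
    unfolding vec_norm_def using A by simp
  thus ?thesis by simp
qed

lemma frob_le:
  assumes A: "A \<in> carrier_mat D D" and nA: "op_norm A \<le> 1"
  shows "(\<Sum>i<D. \<Sum>j<D. (cmod (A $$ (i, j)))\<^sup>2) \<le> D"
proof -
  have "(\<Sum>i<D. \<Sum>j<D. (cmod (A $$ (i, j)))\<^sup>2) = (\<Sum>j<D. \<Sum>i<D. (cmod (A $$ (i, j)))\<^sup>2)"
    by (rule sum.swap)
  also have "\<dots> \<le> (\<Sum>j<D. 1)" by (rule sum_mono) (use col_sq_le[OF A nA] in auto)
  finally show ?thesis by simp
qed

lemma tr_prod_bound:
  assumes A: "A \<in> carrier_mat D D" and nA: "op_norm A \<le> 1"
    and B: "B \<in> carrier_mat D D" and nB: "op_norm B \<le> 1"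
  shows "cmod (mtr (A * B)) \<le> D"
proof -
  have ab: "x * y \<le> (x\<^sup>2 + y\<^sup>2) / 2" for x y :: real
  proof -
    have "0 \<le> (x - y)\<^sup>2" by simp
    hence "0 \<le> x\<^sup>2 + y\<^sup>2 - 2 * (x * y)" by (simp add: power2_diff)
    hence "2 * (x * y) \<le> x\<^sup>2 + y\<^sup>2" by linarith
    thus ?thesis by (simp add: field_simps)
  qed
  have "cmod (mtr (A * B)) = cmod (\<Sum>i<D. \<Sum>k<D. A $$ (i, k) * B $$ (k, i))"
    using mtr_mult[OF A B] by simp
  also have "\<dots> \<le> (\<Sum>i<D. cmod (\<Sum>k<D. A $$ (i, k) * B $$ (k, i)))" by (rule norm_sum)
  also have "\<dots> \<le> (\<Sum>i<D. \<Sum>k<D. cmod (A $$ (i, k)) * cmod (B $$ (k, i)))"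
    by (rule sum_mono) (auto intro: order.trans[OF norm_sum] simp: norm_mult)
  also have "\<dots> \<le> (\<Sum>i<D. \<Sum>k<D. ((cmod (A $$ (i, k)))\<^sup>2 + (cmod (B $$ (k, i)))\<^sup>2) / 2)"
    by (intro sum_mono ab)
  also have "\<dots> = ((\<Sum>i<D. \<Sum>k<D. (cmod (A $$ (i, k)))\<^sup>2) + (\<Sum>i<D. \<Sum>k<D. (cmod (B $$ (k, i)))\<^sup>2)) / 2"
    by (simp add: sum.distrib add_divide_distrib sum_divide_distrib)
  also have "(\<Sum>i<D. \<Sum>k<D. (cmod (B $$ (k, i)))\<^sup>2) = (\<Sum>k<D. \<Sum>i<D. (cmod (B $$ (k, i)))\<^sup>2)"
    by (rule sum.swap)
  also have "((\<Sum>i<D. \<Sum>k<D. (cmod (A $$ (i, k)))\<^sup>2) + (\<Sum>k<D. \<Sum>i<D. (cmod (B $$ (k, i)))\<^sup>2)) / 2 \<le> (D + D) / 2"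
    using frob_le[OF A nA] frob_le[OF B nB] by (intro divide_right_mono add_mono) auto
  finally show ?thesis by simp
qed

lemma tr_bound:
  assumes A: "A \<in> carrier_mat D D" and nA: "op_norm A \<le> 1"
  shows "cmod (mtr A) \<le> D"
proof -
  have "cmod (A $$ (i, i)) \<le> 1" if i: "i < D" for i
  proof -
    have "(cmod (A $$ (i, i)))\<^sup>2 \<le> (\<Sum>k<D. (cmod (A $$ (k, i)))\<^sup>2)"
      by (rule member_le_sum) (use i in auto)
    also have "\<dots> \<le> 1" by (rule col_sq_le[OF A nA i])
    finally show ?thesis by (simp add: power_le_one_iff)
  qed
  hence "(\<Sum>i<D. cmod (A $$ (i, i))) \<le> (\<Sum>i<D. 1)" by (intro sum_mono) auto
  moreover have "cmod (mtr A) \<le> (\<Sum>i<D. cmod (A $$ (i, i)))"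
    unfolding mtr_def using A by (simp add: norm_sum)
  ultimately show ?thesis by simp
qed




lemma sum3_swap: "(\<Sum>k\<in>K. \<Sum>a\<in>A. \<Sum>b\<in>B. f k a b) = (\<Sum>a\<in>A. \<Sum>b\<in>B. \<Sum>k\<in>K. f k a b)"
proof -
  have "(\<Sum>k\<in>K. \<Sum>a\<in>A. \<Sum>b\<in>B. f k a b) = (\<Sum>a\<in>A. \<Sum>k\<in>K. \<Sum>b\<in>B. f k a b)"
    by (rule sum.swap)
  also have "\<dots> = (\<Sum>a\<in>A. \<Sum>b\<in>B. \<Sum>k\<in>K. f k a b)"
    by (rule sum.cong[OF refl], rule sum.swap)
  finally show ?thesis .
qed

lemma sum4_swap: "(\<Sum>i\<in>I. \<Sum>k\<in>K. \<Sum>a\<in>A. \<Sum>b\<in>B. f i k a b) = (\<Sum>a\<in>A. \<Sum>b\<in>B. \<Sum>i\<in>I. \<Sum>k\<in>K. f i k a b)"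
proof -
  have "(\<Sum>i\<in>I. \<Sum>k\<in>K. \<Sum>a\<in>A. \<Sum>b\<in>B. f i k a b) = (\<Sum>i\<in>I. \<Sum>a\<in>A. \<Sum>b\<in>B. \<Sum>k\<in>K. f i k a b)"
    by (rule sum.cong[OF refl], rule sum3_swap)
  also have "\<dots> = (\<Sum>a\<in>A. \<Sum>b\<in>B. \<Sum>i\<in>I. \<Sum>k\<in>K. f i k a b)"
    by (rule sum3_swap)
  finally show ?thesis .
qed

lemma trace_real: assumes "hermitian_mat A" "A \<in> carrier_mat D D" shows "Im (mtr A) = 0"
proof -
  have "Im (A $$ (i, i)) = 0" if "i < D" for i
    using herm_entry[OF assms that that] by (metis cnj.simps(2) neg_equal_zero)
  thus ?thesis unfolding mtr_def using assms(2) by (simp add: Im_sum)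
qed

theorem mainTheorem5:
  fixes n d k \<Delta> :: nat
    and E :: "nat set set"
    and Hloc :: "nat set \<Rightarrow> complex mat"
  assumes d_pos: "d \<ge> 1"
    and E_fin: "finite E"
    and m_pos: "card E \<ge> 1"
    and edges: "\<forall>\<eta>\<in>E. \<eta> \<subseteq> {..<n} \<and> card \<eta> = k"
    and regular: "\<forall>v<n. card {\<eta>\<in>E. v \<in> \<eta>} = \<Delta>"
    and herm: "\<forall>\<eta>\<in>E. hermitian_mat (Hloc \<eta>)"
    and local: "\<forall>\<eta>\<in>E. acts_only_on d n \<eta> (Hloc \<eta>)"
    and bounded: "\<forall>\<eta>\<in>E. op_norm (Hloc \<eta>) \<le> 1"
  shows "let H = Matrix.mat (d ^ n) (d ^ n) (\<lambda>(i, j). \<Sum>\<eta>\<in>E. Hloc \<eta> $$ (i, j));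
             h = (1 / of_nat (card E)) \<cdot>\<^sub>m H;
             \<nu> = measure_pmf (esd h)
         in (\<integral>t. t ^ 2 \<partial>\<nu>) - (\<integral>t. t \<partial>\<nu>) ^ 2 \<le> 4 * real k ^ 2 / real n"
proof -
  define D where "D = d ^ n"
  define m where "m = card E"
  define H where "H = Matrix.mat (d ^ n) (d ^ n) (\<lambda>(i, j). \<Sum>\<eta>\<in>E. Hloc \<eta> $$ (i, j))"
  define h where "h = (1 / of_nat (card E)) \<cdot>\<^sub>m H"
  have Dpos: "D > 0" using d_pos unfolding D_def by simp
  have mpos: "m > 0" using m_pos unfolding m_def by simp
  have Hc: "Hloc \<eta> \<in> carrier_mat D D" if "\<eta> \<in> E" for \<eta>
    using local that unfolding acts_only_on_def D_def by auto
  have hc: "h \<in> carrier_mat D D" unfolding h_def H_def D_def by simp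
  have hij: "h $$ (i, j) = (1 / of_nat m) * (\<Sum>\<eta>\<in>E. Hloc \<eta> $$ (i, j))" if "i < D" "j < D" for i j
    using that unfolding h_def H_def D_def m_def by simp
  have hherm: "h $$ (i, j) = cnj (h $$ (j, i))" if "i < D" "j < D" for i j
  proof -
    have "(\<Sum>\<eta>\<in>E. Hloc \<eta> $$ (i, j)) = (\<Sum>\<eta>\<in>E. cnj (Hloc \<eta> $$ (j, i)))"
      by (rule sum.cong[OF refl]) (use herm_entry herm Hc that in blast)
    thus ?thesis using hij that by (simp add: cnj_sum)
  qed
  note stats = esd_stats[OF hc Dpos hherm]
  define t where "t \<eta> = mtr (Hloc \<eta>)" for \<eta>
  define p where "p \<eta> \<eta>' = mtr (Hloc \<eta> * Hloc \<eta>')" for \<eta> \<eta>'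
  have trh: "mtr h = (1 / of_nat m) * (\<Sum>\<eta>\<in>E. t \<eta>)"
  proof -
    have "mtr h = (\<Sum>i<D. (1 / of_nat m) * (\<Sum>\<eta>\<in>E. Hloc \<eta> $$ (i, i)))"
      unfolding mtr_def using hc hij by simp
    also have "\<dots> = (1 / of_nat m) * (\<Sum>i<D. \<Sum>\<eta>\<in>E. Hloc \<eta> $$ (i, i))"
      by (simp only: sum_distrib_left)
    also have "(\<Sum>i<D. \<Sum>\<eta>\<in>E. Hloc \<eta> $$ (i, i)) = (\<Sum>\<eta>\<in>E. \<Sum>i<D. Hloc \<eta> $$ (i, i))"
      by (rule sum.swap)
    also have "(\<Sum>\<eta>\<in>E. \<Sum>i<D. Hloc \<eta> $$ (i, i)) = (\<Sum>\<eta>\<in>E. t \<eta>)"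
      unfolding t_def mtr_def using Hc by (intro sum.cong) auto
    finally show ?thesis .
  qed
  have trhh: "mtr (h * h) = (1 / of_nat m)^2 * (\<Sum>\<eta>\<in>E. \<Sum>\<eta>'\<in>E. p \<eta> \<eta>')"
  proof -
    have "mtr (h * h) = (\<Sum>i<D. \<Sum>k<D. h $$ (i, k) * h $$ (k, i))" by (rule mtr_mult[OF hc hc])
    also have "\<dots> = (\<Sum>i<D. \<Sum>k<D. (1 / of_nat m)^2 * (\<Sum>\<eta>\<in>E. \<Sum>\<eta>'\<in>E. Hloc \<eta> $$ (i, k) * Hloc \<eta>' $$ (k, i)))"
      by (intro sum.cong refl) (simp add: hij power2_eq_square sum_product)
    also have "\<dots> = (1 / of_nat m)^2 * (\<Sum>i<D. \<Sum>k<D. \<Sum>\<eta>\<in>E. \<Sum>\<eta>'\<in>E. Hloc \<eta> $$ (i, k) * Hloc \<eta>' $$ (k, i))"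
      by (simp add: sum_distrib_left)
    also have "(\<Sum>i<D. \<Sum>k<D. \<Sum>\<eta>\<in>E. \<Sum>\<eta>'\<in>E. Hloc \<eta> $$ (i, k) * Hloc \<eta>' $$ (k, i))
        = (\<Sum>\<eta>\<in>E. \<Sum>\<eta>'\<in>E. \<Sum>i<D. \<Sum>k<D. Hloc \<eta> $$ (i, k) * Hloc \<eta>' $$ (k, i))"
      by (rule sum4_swap)
    also have "\<dots> = (\<Sum>\<eta>\<in>E. \<Sum>\<eta>'\<in>E. p \<eta> \<eta>')"
      unfolding p_def by (intro sum.cong refl) (simp add: mtr_mult[OF Hc Hc])
    finally show ?thesis .
  qed
  define R where "R \<eta> = Re (t \<eta>)" for \<eta>
  define P where "P \<eta> \<eta>' = Re (p \<eta> \<eta>')" for \<eta> \<eta>'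
  define c where "c \<eta> \<eta>' = real D * P \<eta> \<eta>' - R \<eta> * R \<eta>'" for \<eta> \<eta>'
  define V where "V = (\<integral>t. t ^ 2 \<partial>measure_pmf (esd h)) - (\<integral>t. t \<partial>measure_pmf (esd h)) ^ 2"
  have ReH: "Re (mtr h) = (\<Sum>\<eta>\<in>E. R \<eta>) / m"
    unfolding trh R_def by (simp add: Re_sum)
  have ReHH: "Re (mtr (h * h)) = (\<Sum>\<eta>\<in>E. \<Sum>\<eta>'\<in>E. P \<eta> \<eta>') / m^2"
  proof -
    have "(1 / complex_of_nat m)^2 = complex_of_real (1 / real m ^ 2)" by (simp add: power_divide)
    thus ?thesis unfolding trhh P_def by (simp add: Re_sum)
  qed
  have sumc: "(\<Sum>\<eta>\<in>E. \<Sum>\<eta>'\<in>E. c \<eta> \<eta>') = real D * (\<Sum>\<eta>\<in>E. \<Sum>\<eta>'\<in>E. P \<eta> \<eta>') - (\<Sum>\<eta>\<in>E. R \<eta>)^2"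
  proof -
    have sq: "(\<Sum>\<eta>\<in>E. R \<eta>)^2 = (\<Sum>\<eta>\<in>E. \<Sum>\<eta>'\<in>E. R \<eta> * R \<eta>')"
      by (simp add: power2_eq_square sum_product)
    show ?thesis unfolding c_def sq by (simp add: sum_subtractf sum_distrib_left)
  qed
  have Vc: "V * (real m ^ 2 * real D ^ 2) = (\<Sum>\<eta>\<in>E. \<Sum>\<eta>'\<in>E. c \<eta> \<eta>')"
  proof -
    have E2: "(\<integral>t. t ^ 2 \<partial>measure_pmf (esd h)) = Re (mtr (h * h)) / D" by (rule stats(1))
    have E1: "(\<integral>t. t \<partial>measure_pmf (esd h)) = Re (mtr h) / D" by (rule stats(2))
    show ?thesis unfolding V_def E2 E1 ReH ReHH sumc using mpos Dpos
      by (simp add: field_simps power2_eq_square)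
  qed
  have Rbd: "\<bar>R \<eta>\<bar> \<le> real D" if "\<eta> \<in> E" for \<eta>
    using abs_Re_le_cmod[of "t \<eta>"] tr_bound[OF Hc[OF that]] bounded that
    unfolding R_def t_def by force
  have Pbd: "\<bar>P \<eta> \<eta>'\<bar> \<le> real D" if "\<eta> \<in> E" "\<eta>' \<in> E" for \<eta> \<eta>'
    using abs_Re_le_cmod[of "p \<eta> \<eta>'"] tr_prod_bound[OF Hc[OF that(1)] _ Hc[OF that(2)]] bounded that
    unfolding P_def p_def by force
  have c_le: "c \<eta> \<eta>' \<le> 2 * real D ^ 2" if "\<eta> \<in> E" "\<eta>' \<in> E" for \<eta> \<eta>'
  proof -
    have "real D * P \<eta> \<eta>' \<le> real D * real D"
      using Pbd[OF that] by (intro mult_left_mono) auto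
    moreover have "- (R \<eta> * R \<eta>') \<le> \<bar>R \<eta>\<bar> * \<bar>R \<eta>'\<bar>"
      by (simp add: abs_mult[symmetric])
    moreover have "\<bar>R \<eta>\<bar> * \<bar>R \<eta>'\<bar> \<le> real D * real D"
      using Rbd that by (intro mult_mono) auto
    ultimately show ?thesis unfolding c_def by (simp add: power2_eq_square)
  qed
  have c_disj: "c \<eta> \<eta>' = 0" if "\<eta> \<in> E" "\<eta>' \<in> E" "\<eta> \<inter> \<eta>' = {}" for \<eta> \<eta>'
  proof -
    have f: "of_nat D * p \<eta> \<eta>' = t \<eta> * t \<eta>'"
      unfolding p_def t_def D_def
      by (rule tr_factor[OF d_pos]) (use local that in auto)
    have i1: "Im (t \<eta>) = 0" and i2: "Im (t \<eta>') = 0"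
      unfolding t_def using trace_real herm Hc that by auto
    have "Re (of_nat D * p \<eta> \<eta>') = real D * P \<eta> \<eta>'" unfolding P_def by simp
    moreover have "Re (t \<eta> * t \<eta>') = R \<eta> * R \<eta>'" unfolding R_def using i1 i2 by simp
    ultimately show ?thesis unfolding c_def using f by simp
  qed
  define C where "C = 2 * real D ^ 2"
  have Cnn: "C \<ge> 0" unfolding C_def by simp
  have fin\<eta>: "finite \<eta>" if "\<eta> \<in> E" for \<eta>
    using edges that finite_subset[of \<eta> "{..<n}"] by auto
  have c_ind: "c \<eta> \<eta>' \<le> (\<Sum>v\<in>\<eta>. if v \<in> \<eta>' then C else 0)" if "\<eta> \<in> E" "\<eta>' \<in> E" for \<eta> \<eta>'
  proof (cases "\<eta> \<inter> \<eta>' = {}")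
    case True
    thus ?thesis using c_disj[OF that True] Cnn by (simp add: sum_nonneg)
  next
    case False
    then obtain v where v: "v \<in> \<eta>" "v \<in> \<eta>'" by auto
    have "c \<eta> \<eta>' \<le> C" using c_le[OF that] unfolding C_def .
    also have "C = (if v \<in> \<eta>' then C else 0)" using v by simp
    also have "\<dots> \<le> (\<Sum>v\<in>\<eta>. if v \<in> \<eta>' then C else 0)"
      by (rule member_le_sum) (use v fin\<eta>[OF that(1)] Cnn in auto)
    finally show ?thesis .
  qed
  have deg: "(\<Sum>\<eta>'\<in>E. if v \<in> \<eta>' then C else 0) = C * real \<Delta>" if "v < n" for v
  proof -
    have "(\<Sum>\<eta>'\<in>E. if v \<in> \<eta>' then C else 0) = (\<Sum>\<eta>'\<in>{\<eta>'\<in>E. v \<in> \<eta>'}. C)"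
      by (rule sum.inter_filter[symmetric]) (rule E_fin)
    also have "\<dots> = C * real (card {\<eta>'\<in>E. v \<in> \<eta>'})" by simp
    finally show ?thesis using regular that by simp
  qed
  have sum_le: "(\<Sum>\<eta>\<in>E. \<Sum>\<eta>'\<in>E. c \<eta> \<eta>') \<le> real m * real k * C * real \<Delta>"
  proof -
    have "(\<Sum>\<eta>\<in>E. \<Sum>\<eta>'\<in>E. c \<eta> \<eta>') \<le> (\<Sum>\<eta>\<in>E. \<Sum>\<eta>'\<in>E. \<Sum>v\<in>\<eta>. if v \<in> \<eta>' then C else 0)"
      by (intro sum_mono c_ind) auto
    also have "\<dots> = (\<Sum>\<eta>\<in>E. \<Sum>v\<in>\<eta>. \<Sum>\<eta>'\<in>E. if v \<in> \<eta>' then C else 0)"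
      by (rule sum.cong[OF refl], rule sum.swap)
    also have "\<dots> = (\<Sum>\<eta>\<in>E. \<Sum>v\<in>\<eta>. C * real \<Delta>)"
      by (intro sum.cong refl deg) (use edges in blast)
    also have "\<dots> = (\<Sum>\<eta>\<in>E. real k * (C * real \<Delta>))"
      by (intro sum.cong refl) (use edges in simp)
    also have "\<dots> = real m * real k * C * real \<Delta>" unfolding m_def by simp
    finally show ?thesis .
  qed
  have dc: "m * k = n * \<Delta>"
  proof -
    have "n * \<Delta> = (\<Sum>v<n. card {\<eta>\<in>E. v \<in> \<eta>})" using regular by simp
    also have "\<dots> = (\<Sum>v<n. \<Sum>\<eta>\<in>E. if v \<in> \<eta> then 1 else 0)"
      by (intro sum.cong refl) (simp add: sum.inter_filter[OF E_fin, symmetric])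
    also have "\<dots> = (\<Sum>\<eta>\<in>E. \<Sum>v<n. if v \<in> \<eta> then 1 else 0)" by (rule sum.swap)
    also have "\<dots> = (\<Sum>\<eta>\<in>E. card {v\<in>{..<n}. v \<in> \<eta>})"
      by (intro sum.cong refl) (simp add: sum.inter_filter[symmetric])
    also have "\<dots> = (\<Sum>\<eta>\<in>E. k)"
    proof (intro sum.cong refl)
      fix \<eta> assume "\<eta> \<in> E"
      hence "{v\<in>{..<n}. v \<in> \<eta>} = \<eta>" "card \<eta> = k" using edges by auto
      thus "card {v\<in>{..<n}. v \<in> \<eta>} = k" by simp
    qed
    finally show ?thesis unfolding m_def by simp
  qed
  have Vle: "V \<le> 4 * real k ^ 2 / real n"
  proof -
    have mD: "real m ^ 2 * real D ^ 2 > 0" using mpos Dpos by simp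
    have A: "V * (real m ^ 2 * real D ^ 2) \<le> real m * real k * C * real \<Delta>"
      using Vc sum_le by simp
    show ?thesis
    proof (cases "k = 0")
      case True
      hence "V * (real m ^ 2 * real D ^ 2) \<le> 0" using A by simp
      hence "V \<le> 0" using mult_le_cancel_right_pos[OF mD, of V 0] by simp
      thus ?thesis using True by simp
    next
      case False
      obtain \<eta> where "\<eta> \<in> E" using mpos unfolding m_def by (metis card.empty ex_in_conv less_irrefl)
      hence "\<eta> \<subseteq> {..<n}" "card \<eta> = k" using edges by auto
      hence "\<eta> \<noteq> {}" using False by auto
      hence npos: "n > 0" using \<open>\<eta> \<subseteq> {..<n}\<close> by auto
      have "V * (real m ^ 2 * real D ^ 2) * real n \<le> real m * real k * C * real \<Delta> * real n"
        using A by (intro mult_right_mono) auto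
      also have "\<dots> = real m * real k * C * (real n * real \<Delta>)" by (simp add: mult_ac)
      also have "real n * real \<Delta> = real m * real k" by (metis dc of_nat_mult)
      also have "real m * real k * C * (real m * real k) = (2 * real k ^ 2) * (real m ^ 2 * real D ^ 2)"
        unfolding C_def by (simp add: power2_eq_square mult_ac)
      finally have "V * real n * (real m ^ 2 * real D ^ 2) \<le> (2 * real k ^ 2) * (real m ^ 2 * real D ^ 2)"
        by (simp add: mult_ac)
      hence "V * real n \<le> 2 * real k ^ 2" using mult_le_cancel_right_pos[OF mD] by blast
      hence "V \<le> 2 * real k ^ 2 / real n" using npos by (simp add: pos_le_divide_eq)
      also have "\<dots> \<le> 4 * real k ^ 2 / real n" using npos by (intro divide_right_mono) auto
      finally show ?thesis .
    qed
  qed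
  show ?thesis using Vle unfolding V_def h_def H_def Let_def .
qed


end
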